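(* Let $m\ge2$ and let $X_{2m}\subset\mathbb{R}^2$ be a regular polygon with $2m$ vertices centered at the origin, with circumradius $a_{2m}$ (half the length of its longest diagonal) satisfying $\sin\!\left(\frac{\pi-\frac{2\pi}{2m}}{2}\right)=\frac{1}{a_{2m}^2}$, i.e. $a_{2m}^2\cos(\pi/(2m))=1$. Then the dual Wulff shape $\mathcal{D}X_{2m}$ is not equal to $X_{2m}$, but $\mathcal{D}X_{2m}$ is congruent to $X_{2m}$. (For $m=2$: a square centered at the origin with $a_4^2=\sqrt2$, edge length $2/a_4$, has dual Wulff shape a different square centered at the origin with the same edge length.)
   Context: Every convex body $W\subset\mathbb{R}^{2}$ with the origin in its interior is a Wulff shape $\mathcal{W}_\gamma=\bigcap_{\theta\in S^1}\{x: x\cdot\theta\le\gamma(\theta)\}$ for some continuous $\gamma:S^1\to\mathbb{R}_+$. With $w(\theta)\theta$ the unique point of $\partial W$ on the ray $\{r\theta:r>0\}$, the dual Wulff shape is $\mathcal{D}W=\mathcal{W}_{\overline\gamma}$ with $\overline\gamma(\theta)=1/w(-\theta)$. *)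

theory Defs
  imports "HOL-Analysis.Analysis"
begin

definition pt :: "real \<Rightarrow> real \<Rightarrow> real^2" where
  "pt x y = vector [x, y]"

definition wulff_shape :: "(real^2 \<Rightarrow> real) \<Rightarrow> (real^2) set" where
  "wulff_shape \<gamma> = (\<Inter>\<theta>\<in>sphere 0 1. {x. x \<bullet> \<theta> \<le> \<gamma> \<theta>})"

definition radial_fun :: "(real^2) set \<Rightarrow> real^2 \<Rightarrow> real" where
  "radial_fun W \<theta> = (THE r. r > 0 \<and> r *\<^sub>R \<theta> \<in> frontier W)"

definition dual_wulff :: "(real^2) set \<Rightarrow> (real^2) set" where
  "dual_wulff W = wulff_shape (\<lambda>\<theta>. 1 / radial_fun W (- \<theta>))"

definition congruent :: "(real^2) set \<Rightarrow> (real^2) set \<Rightarrow> bool" where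
  "congruent A B \<longleftrightarrow> (\<exists>f. (\<forall>x y. dist (f x) (f y) = dist x y) \<and> f ` A = B)"

definition regular_polygon :: "nat \<Rightarrow> real \<Rightarrow> real \<Rightarrow> (real^2) set" where
  "regular_polygon n a t0 =
     convex hull {pt (a * cos (t0 + 2 * pi * real k / real n)) (a * sin (t0 + 2 * pi * real k / real n)) | k. k < n}"

end

theory Submission imports Defs begin

lemma pt_nth[simp]: "pt x y $ 1 = x" "pt x y $ 2 = y"
  by (simp_all add: pt_def)

lemma pt_inner[simp]: "pt a b \<bullet> pt c d = a*c + b*d"
  by (simp add: inner_vec_def sum_2)

lemma vec2_eq: "z = pt (z$1) (z$2)"
  by (simp add: vec_eq_iff forall_2)

lemma inner2: "(x::real^2) \<bullet> y = x$1*y$1 + x$2*y$2"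
  by (simp add: inner_vec_def sum_2)

lemma radial_props:
  fixes S :: "(real^2) set"
  assumes "compact S" "convex S" "0 \<in> interior S" "norm \<theta> = 1"
  shows "radial_fun S \<theta> > 0 \<and> radial_fun S \<theta> *\<^sub>R \<theta> \<in> frontier S"
proof -
  have ex: "\<exists>r. r > 0 \<and> r *\<^sub>R \<theta> \<in> frontier S"
  proof -
    have "\<theta> \<noteq> 0" using assms(4) by auto
    then obtain d where "0 < d" "(0 + d *\<^sub>R \<theta>) \<in> frontier S"
      using ray_to_frontier[OF compact_imp_bounded[OF assms(1)] assms(3)] by blast
    thus ?thesis by auto
  qed
  have uniq: "r1 = r2" if "r1 > 0" "r1 *\<^sub>R \<theta> \<in> frontier S" "r2 > 0" "r2 *\<^sub>R \<theta> \<in> frontier S" for r1 r2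
  proof (rule ccontr)
    have gen: False if "s1 > 0" "s1 *\<^sub>R \<theta> \<in> frontier S" "s2 > 0" "s2 *\<^sub>R \<theta> \<in> frontier S" "s1 < s2" for s1 s2
    proof -
      have c: "s2 *\<^sub>R \<theta> \<in> closure S" using that(4) by (simp add: frontier_def)
      have "s2 *\<^sub>R \<theta> - (1 - s1/s2) *\<^sub>R (s2 *\<^sub>R \<theta> - 0) \<in> interior S"
        using mem_interior_closure_convex_shrink[OF assms(2) assms(3) c, of "1 - s1/s2"] that by auto
      moreover have "s2 *\<^sub>R \<theta> - (1 - s1/s2) *\<^sub>R (s2 *\<^sub>R \<theta> - 0) = s1 *\<^sub>R \<theta>"
        using that by (simp add: algebra_simps)
      ultimately show False using that(2) by (simp add: frontier_def)
    qed
    assume "r1 \<noteq> r2"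
    then show False using gen[of r1 r2] gen[of r2 r1] that by linarith
  qed
  have "\<exists>!r. r > 0 \<and> r *\<^sub>R \<theta> \<in> frontier S" using ex uniq by blast
  from theI'[OF this] show ?thesis unfolding radial_fun_def by blast
qed

lemma radial_bound:
  fixes S :: "(real^2) set"
  assumes "compact S" "convex S" "0 \<in> interior S" "p \<in> S" "p \<noteq> 0"
  shows "norm p \<le> radial_fun S (p /\<^sub>R norm p)"
proof (rule ccontr)
  let ?\<theta> = "p /\<^sub>R norm p" let ?w = "radial_fun S ?\<theta>"
  assume "\<not> ?thesis"
  hence lt: "?w < norm p" by simp
  have n1: "norm ?\<theta> = 1" using assms(5) by simp
  from radial_props[OF assms(1-3) n1] have w: "?w > 0" "?w *\<^sub>R ?\<theta> \<in> frontier S" by auto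
  have c: "p \<in> closure S" using assms(4) closure_subset by blast
  have "p - (1 - ?w / norm p) *\<^sub>R (p - 0) \<in> interior S"
    using mem_interior_closure_convex_shrink[OF assms(2) assms(3) c, of "1 - ?w/norm p"] lt w assms(5) by auto
  moreover have "p - (1 - ?w / norm p) *\<^sub>R (p - 0) = ?w *\<^sub>R ?\<theta>"
    using assms(5) by (simp add: algebra_simps divide_inverse mult.commute)
  ultimately show False using w(2) by (simp add: frontier_def)
qed

lemma dual_polar:
  fixes S :: "(real^2) set"
  assumes "compact S" "convex S" "0 \<in> interior S"
  shows "dual_wulff S = {x. \<forall>p\<in>S. - (x \<bullet> p) \<le> 1}"
proof (intro set_eqI iffI)
  fix x assume x: "x \<in> dual_wulff S"
  hence x': "\<And>\<theta>. norm \<theta> = 1 \<Longrightarrow> x \<bullet> \<theta> \<le> 1 / radial_fun S (- \<theta>)"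
    by (auto simp: dual_wulff_def wulff_shape_def)
  show "x \<in> {x. \<forall>p\<in>S. - (x \<bullet> p) \<le> 1}"
  proof (intro CollectI ballI)
    fix p assume p: "p \<in> S"
    show "- (x \<bullet> p) \<le> 1"
    proof (cases "p = 0")
      case True then show ?thesis by simp
    next
      case False
      let ?\<theta> = "- (p /\<^sub>R norm p)"
      have n: "norm ?\<theta> = 1" using False by simp
      have b: "norm p \<le> radial_fun S (p /\<^sub>R norm p)" using radial_bound[OF assms p False] .
      have wpos: "radial_fun S (p /\<^sub>R norm p) > 0"
        using radial_props[OF assms, of "p /\<^sub>R norm p"] False by simp
      have le: "x \<bullet> ?\<theta> \<le> 1 / radial_fun S (p /\<^sub>R norm p)" using x'[OF n] by simp
      have e1: "x \<bullet> ?\<theta> = - (x \<bullet> p) / norm p" by (simp add: divide_inverse mult.commute)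
      have eq: "- (x \<bullet> p) = norm p * (x \<bullet> ?\<theta>)" unfolding e1 using False by simp
      show ?thesis
      proof (cases "x \<bullet> ?\<theta> \<le> 0")
        case True
        have "norm p * (x \<bullet> ?\<theta>) \<le> 0" using True by (intro mult_nonneg_nonpos) auto
        then show ?thesis using eq by linarith
      next
        case False
        have "norm p * (x \<bullet> ?\<theta>) \<le> radial_fun S (p /\<^sub>R norm p) * (1 / radial_fun S (p /\<^sub>R norm p))"
          using False b le wpos by (intro mult_mono) auto
        also have "\<dots> = 1" using wpos by simp
        finally show ?thesis using eq by linarith
      qed
    qed
  qed
next
  fix x assume x: "x \<in> {x. \<forall>p\<in>S. - (x \<bullet> p) \<le> 1}"
  show "x \<in> dual_wulff S"
    unfolding dual_wulff_def wulff_shape_def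
  proof (intro InterI, clarsimp)
    fix \<theta> :: "real^2" assume n: "norm \<theta> = 1"
    have n': "norm (-\<theta>) = 1" using n by simp
    from radial_props[OF assms n'] have w: "radial_fun S (-\<theta>) > 0" "radial_fun S (-\<theta>) *\<^sub>R (-\<theta>) \<in> frontier S" by auto
    have "radial_fun S (-\<theta>) *\<^sub>R (-\<theta>) \<in> S"
      using w(2) frontier_subset_closed[OF compact_imp_closed[OF assms(1)]] by blast
    hence "- (x \<bullet> (radial_fun S (-\<theta>) *\<^sub>R (-\<theta>))) \<le> 1" using x by blast
    hence "radial_fun S (-\<theta>) * (x \<bullet> \<theta>) \<le> 1" by (simp add: inner_scaleR_right)
    thus "x \<bullet> \<theta> \<le> 1 / radial_fun S (-\<theta>)" using w(1) by (simp add: field_simps mult.commute)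
  qed
qed


definition uu :: "real \<Rightarrow> real^2" where "uu \<theta> = pt (cos \<theta>) (sin \<theta>)"

definition V :: "nat \<Rightarrow> real \<Rightarrow> real \<Rightarrow> int \<Rightarrow> real^2" where
  "V n a t k = pt (a * cos (t + 2*pi* of_int k / real n)) (a * sin (t + 2*pi* of_int k / real n))"

lemma V_uu: "V n a t k = a *\<^sub>R uu (t + 2*pi* of_int k / real n)"
  by (simp add: V_def uu_def vec_eq_iff forall_2)

lemma uu_inner: "uu \<alpha> \<bullet> uu \<beta> = cos (\<alpha> - \<beta>)"
  by (simp add: uu_def cos_diff)

lemma cos_shift_int: "cos (x + 2*pi* of_int j) = cos x" "sin (x + 2*pi* of_int j) = sin x"
  by (simp_all add: cos_add sin_add)

lemma V_mod: assumes "n > 0" shows "V n a t k = V n a t (k mod int n)"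
proof -
  have k: "k = k mod int n + int n * (k div int n)" by simp
  have "t + 2*pi* of_int k / real n = (t + 2*pi* of_int (k mod int n) / real n) + 2*pi* of_int (k div int n)"
  proof -
    have kr: "real_of_int k = of_int (k mod int n) + real n * of_int (k div int n)"
      by (metis (mono_tags) k of_int_add of_int_mult of_int_of_nat_eq)
    show ?thesis using assms by (simp add: kr field_simps)
  qed
  then show ?thesis unfolding V_def by (simp only: cos_shift_int)
qed

lemma V_period: assumes "n > 0" shows "V n a t (k + int n * j) = V n a t k"
  using V_mod[OF assms, of a t "k + int n * j"] V_mod[OF assms, of a t k] by simp

lemma poly_eq: assumes "n > 0" shows "regular_polygon n a t = convex hull (range (V n a t))"
proof -
  have "{pt (a * cos (t + 2 * pi * real k / real n)) (a * sin (t + 2 * pi * real k / real n)) | k. k < n}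
      = range (V n a t)"
  proof (intro set_eqI iffI)
    fix x assume "x \<in> {pt (a * cos (t + 2 * pi * real k / real n)) (a * sin (t + 2 * pi * real k / real n)) | k. k < n}"
    then obtain k where "x = V n a t (int k)" by (auto simp: V_def)
    thus "x \<in> range (V n a t)" by auto
  next
    fix x assume "x \<in> range (V n a t)"
    then obtain k where x: "x = V n a t k" by auto
    define j where "j = nat (k mod int n)"
    have "int j = k mod int n" using assms by (simp add: j_def)
    moreover have "j < n" using assms unfolding j_def
      by (simp add: nat_less_iff)
    ultimately have "x = V n a t (int j)" "j < n" using V_mod[OF assms] x by auto
    thus "x \<in> {pt (a * cos (t + 2 * pi * real k / real n)) (a * sin (t + 2 * pi * real k / real n)) | k. k < n}"
      by (auto simp: V_def)
  qed
  thus ?thesis by (simp add: regular_polygon_def)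
qed

lemma range_V_finite: assumes "n > 0" shows "finite (range (V n a t))"
proof -
  have "range (V n a t) \<subseteq> V n a t ` {0..<int n}"
  proof
    fix x assume "x \<in> range (V n a t)"
    then obtain k where "x = V n a t k" by auto
    then have "x = V n a t (k mod int n)" using V_mod[OF assms] by simp
    moreover have "k mod int n \<in> {0..<int n}" using assms by simp
    ultimately show "x \<in> V n a t ` {0..<int n}" by blast
  qed
  thus ?thesis by (rule finite_subset) simp
qed

lemma cos_odd_le:
  fixes n :: nat and d :: int
  assumes "n \<ge> 3"
  shows "cos ((2* of_int d - 1)*pi/real n) \<le> cos (pi/real n)"
proof -
  define d' where "d' = d mod int n"
  have n0: "real n > 0" using assms by simp
  have dd: "d = d' + int n * (d div int n)" by (simp add: d'_def)
  have "(2* of_int d - 1)*pi/real n = (2* of_int d' - 1)*pi/real n + 2*pi* of_int (d div int n)"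
  proof -
    have kr: "real_of_int d = of_int d' + real n * of_int (d div int n)"
      by (metis (mono_tags) dd of_int_add of_int_mult of_int_of_nat_eq)
    show ?thesis using n0 by (simp add: kr field_simps)
  qed
  hence e: "cos ((2* of_int d - 1)*pi/real n) = cos ((2* of_int d' - 1)*pi/real n)"
    by (simp only: cos_shift_int)
  have d'r: "0 \<le> d'" "d' < int n" using assms by (simp_all add: d'_def)
  show ?thesis
  proof (cases "d' = 0")
    case True then show ?thesis using e by simp
  next
    case False
    hence d1: "1 \<le> d'" "d' \<le> int n - 1" using d'r by auto
    define y where "y = (2* of_int d' - 1)*pi/real n"
    have "real_of_int d' \<ge> 1" "real_of_int d' \<le> real n - 1" using d1 by linarith+
    hence y1: "pi/real n \<le> y" and y2: "y \<le> 2*pi - pi/real n"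
      unfolding y_def using n0 pi_gt_zero by (simp_all add: field_simps)
    have pn: "0 \<le> pi/real n" "pi / real n \<le> pi" using n0 assms by (simp_all add: field_simps)
    have "cos y \<le> cos (pi/real n)"
    proof (cases "y \<le> pi")
      case True then show ?thesis using cos_monotone_0_pi_le[of "pi/real n" y] y1 pn by auto
    next
      case False
      have "cos y = cos (2*pi - y)" by (simp add: cos_diff)
      also have "\<dots> \<le> cos (pi/real n)" using cos_monotone_0_pi_le[of "pi/real n" "2*pi-y"] y2 False pn by auto
      finally show ?thesis .
    qed
    then show ?thesis using e y_def by simp
  qed
qed


lemma V_half: assumes "m > 0" shows "V (2*m) a t (k + int m) = - V (2*m) a t k"
proof -
  have "t + 2*pi * of_int (k + int m) / real (2*m) = (t + 2*pi * of_int k / real (2*m)) + pi"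
    using assms by (simp add: field_simps)
  then show ?thesis unfolding V_def by (simp only: cos_periodic_pi sin_periodic_pi) (simp add: vec_eq_iff forall_2)
qed

lemma zero_in_hull: assumes "m > 0" shows "0 \<in> convex hull (range (V (2*m) a t))"
proof -
  have "(1/2) *\<^sub>R V (2*m) a t 0 + (1/2) *\<^sub>R V (2*m) a t (0 + int m) \<in> convex hull (range (V (2*m) a t))"
    by (intro convexD[OF convex_convex_hull] hull_inc) auto
  thus ?thesis using V_half[OF assms, of a t 0] by simp
qed

lemma halfplane:
  fixes m :: nat and a t :: real
  assumes m: "m \<ge> 2" and a: "a > 0"
  defines "n \<equiv> 2*m"
  shows "convex hull (range (V n a t)) =
         {x. \<forall>k::int. x \<bullet> uu (t + pi/real n + 2*pi * of_int k / real n) \<le> a * cos (pi/real n)}"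
    (is "_ = ?H")
proof
  have n3: "n \<ge> 3" using m n_def by simp
  have n0: "real n > 0" using n3 by simp
  show "convex hull (range (V n a t)) \<subseteq> ?H"
  proof (rule hull_minimal)
    show "range (V n a t) \<subseteq> ?H"
    proof clarsimp
      fix j k :: int
      have "V n a t j \<bullet> uu (t + pi/real n + 2*pi * of_int k / real n)
          = a * cos ((t + 2*pi * of_int j / real n) - (t + pi/real n + 2*pi * of_int k / real n))"
        by (simp add: V_uu uu_inner)
      also have "(t + 2*pi * of_int j / real n) - (t + pi/real n + 2*pi * of_int k / real n)
          = (2* of_int (j - k) - 1)*pi/real n"
        using n0 by (simp add: field_simps)
      also have "a * cos ((2* of_int (j - k) - 1)*pi/real n) \<le> a * cos (pi/real n)"
        using cos_odd_le[OF n3, of "j-k"] a by (simp add: mult_left_mono)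
      finally show "V n a t j \<bullet> uu (t + pi/real n + 2*pi * of_int k / real n) \<le> a * cos (pi/real n)" .
    qed
    have "?H = (\<Inter>k. {x. uu (t + pi/real n + 2*pi * of_int k / real n) \<bullet> x \<le> a * cos (pi/real n)})"
      by (auto simp: inner_commute)
    then show "convex ?H" by (simp add: convex_INT convex_halfspace_le)
  qed
next
  have n3: "n \<ge> 3" using m n_def by simp
  have n0: "real n > 0" using n3 by simp
  define \<delta> where "\<delta> = 2*pi/real n"
  have \<delta>0: "\<delta> > 0" using n0 by (simp add: \<delta>_def)
  have \<delta>pi: "\<delta> < pi" using n3 by (simp add: \<delta>_def field_simps)
  have sd: "sin \<delta> > 0" using \<delta>0 \<delta>pi by (simp add: sin_gt_zero)
  have h0: "cos (pi/real n) > 0"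
  proof -
    have "pi/real n < pi/2" using n3 by (simp add: field_simps)
    moreover have "- (pi/2) < pi/real n" using n0 pi_gt_zero by (smt (verit) divide_pos_pos)
    ultimately show ?thesis by (simp add: cos_gt_zero_pi)
  qed
  show "?H \<subseteq> convex hull (range (V n a t))"
  proof
    fix x assume x: "x \<in> ?H"
    show "x \<in> convex hull (range (V n a t))"
    proof (cases "x = 0")
      case True then show ?thesis using zero_in_hull[of m a t] m n_def by simp
    next
      case False
      define r where "r = norm x"
      have r0: "r > 0" using False by (simp add: r_def)
      have rr: "r^2 = x$1^2 + x$2^2" unfolding r_def power2_norm_eq_inner inner2 by (simp add: power2_eq_square)
      have "(x$1/r)^2 + (x$2/r)^2 = (x$1^2 + x$2^2)/r^2" by (simp add: power_divide add_divide_distrib)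
      also have "\<dots> = 1" using rr[symmetric] r0 by simp
      finally have "(x$1/r)^2 + (x$2/r)^2 = 1" .
      then obtain \<alpha> where al: "x$1/r = cos \<alpha>" "x$2/r = sin \<alpha>" by (metis sincos_total_2pi)
      have xa: "x = pt (r * cos \<alpha>) (r * sin \<alpha>)" using al r0 vec2_eq[of x] by (simp add: field_simps)
      define k where "k = \<lfloor>(\<alpha> - t)/\<delta>\<rfloor>"
      define \<phi> where "\<phi> = t + 2*pi * of_int k / real n"
      define \<beta> where "\<beta> = \<alpha> - \<phi>"
      have \<phi>\<delta>: "\<phi> = t + of_int k * \<delta>" by (simp add: \<phi>_def \<delta>_def)
      have fl: "of_int k \<le> (\<alpha> - t)/\<delta>" "(\<alpha> - t)/\<delta> < of_int k + 1" unfolding k_def by linarith+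
      have b0: "0 \<le> \<beta>" using fl(1) \<delta>0 unfolding \<beta>_def \<phi>\<delta> by (simp add: field_simps)
      have b1: "\<beta> < \<delta>" using fl(2) \<delta>0 unfolding \<beta>_def \<phi>\<delta> by (simp add: field_simps)
      define lam where "lam = r * sin (\<delta> - \<beta>) / (a * sin \<delta>)"
      define \<mu> where "\<mu> = r * sin \<beta> / (a * sin \<delta>)"
      have l0: "lam \<ge> 0" unfolding lam_def using r0 a sd b0 b1 \<delta>pi by (intro divide_nonneg_pos mult_nonneg_nonneg sin_ge_zero) auto
      have m0: "\<mu> \<ge> 0" unfolding \<mu>_def using r0 a sd b0 b1 \<delta>pi by (intro divide_nonneg_pos mult_nonneg_nonneg sin_ge_zero) auto
      have Vk: "V n a t k = pt (a * cos \<phi>) (a * sin \<phi>)" by (simp add: V_def \<phi>_def)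
      have Vk1: "V n a t (k+1) = pt (a * cos (\<phi> + \<delta>)) (a * sin (\<phi> + \<delta>))"
      proof -
        have "t + 2*pi * of_int (k+1) / real n = \<phi> + \<delta>" using n0 by (simp add: \<phi>_def \<delta>_def field_simps)
        thus ?thesis by (simp add: V_def)
      qed
      have id1: "sin \<delta> * (r * cos (\<phi> + \<beta>)) = r * sin (\<delta> - \<beta>) * cos \<phi> + r * sin \<beta> * cos (\<phi> + \<delta>)"
        by (simp add: sin_diff cos_add algebra_simps)
      have id2: "sin \<delta> * (r * sin (\<phi> + \<beta>)) = r * sin (\<delta> - \<beta>) * sin \<phi> + r * sin \<beta> * sin (\<phi> + \<delta>)"
        by (simp add: sin_diff sin_add cos_add algebra_simps)
      have xeq: "x = lam *\<^sub>R V n a t k + \<mu> *\<^sub>R V n a t (k+1)"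
      proof -
        have "\<alpha> = \<phi> + \<beta>" by (simp add: \<beta>_def)
        have c1: "r * cos \<alpha> = lam * (a * cos \<phi>) + \<mu> * (a * cos (\<phi> + \<delta>))"
          using id1 sd a unfolding lam_def \<mu>_def \<open>\<alpha> = \<phi> + \<beta>\<close> by (simp add: field_simps)
        have c2: "r * sin \<alpha> = lam * (a * sin \<phi>) + \<mu> * (a * sin (\<phi> + \<delta>))"
          using id2 sd a unfolding lam_def \<mu>_def \<open>\<alpha> = \<phi> + \<beta>\<close> by (simp add: field_simps)
        show ?thesis unfolding Vk Vk1 using xa c1 c2 by (simp add: vec_eq_iff forall_2)
      qed
      define N where "N = uu (t + pi/real n + 2*pi * of_int k / real n)"
      have "x \<bullet> N \<le> a * cos (pi/real n)" using x by (simp add: N_def)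
      moreover have "V n a t k \<bullet> N = a * cos (pi/real n)"
      proof -
        have "(t + 2*pi * of_int k / real n) - (t + pi/real n + 2*pi * of_int k / real n) = - (pi/real n)" by simp
        thus ?thesis by (simp add: V_uu N_def uu_inner)
      qed
      moreover have "V n a t (k+1) \<bullet> N = a * cos (pi/real n)"
      proof -
        have eqn: "(t + 2*pi * of_int (k+1) / real n) - (t + pi/real n + 2*pi * of_int k / real n) = pi/real n"
          using n0 by (simp add: field_simps)
        show ?thesis unfolding V_uu N_def inner_scaleR_left uu_inner eqn by simp
      qed
      ultimately have "(lam + \<mu>) * (a * cos (pi/real n)) \<le> 1 * (a * cos (pi/real n))"
        unfolding xeq by (simp add: inner_add_left algebra_simps)
      hence lm: "lam + \<mu> \<le> 1" using a h0 by (simp add: mult_le_cancel_right)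
      have "x \<in> convex hull {V n a t k, V n a t (k+1), 0}"
        unfolding convex_hull_3
        by (rule CollectI, rule exI[of _ lam], rule exI[of _ \<mu>], rule exI[of _ "1 - lam - \<mu>"])
           (use xeq l0 m0 lm in auto)
      moreover have "convex hull {V n a t k, V n a t (k+1), 0} \<subseteq> convex hull (range (V n a t))"
        using zero_in_hull[of m a t] m n_def
        by (intro hull_minimal) (auto intro: hull_inc simp: convex_convex_hull)
      ultimately show ?thesis by blast
    qed
  qed
qed


definition rot :: "real \<Rightarrow> real^2 \<Rightarrow> real^2" where
  "rot \<psi> z = pt (cos \<psi> * z$1 - sin \<psi> * z$2) (sin \<psi> * z$1 + cos \<psi> * z$2)"

lemma rot_linear: "linear (rot \<psi>)"
  by (rule linearI) (simp_all add: rot_def pt_def vec_eq_iff forall_2 algebra_simps)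

lemma rot_V: "rot \<psi> (V n a s k) = V n a (s + \<psi>) k"
  by (simp add: rot_def V_def vec_eq_iff forall_2 cos_add sin_add algebra_simps)

lemma rot_norm: "norm (rot \<psi> z) = norm z"
proof -
  have "rot \<psi> z \<bullet> rot \<psi> z = ((sin \<psi>)^2 + (cos \<psi>)^2) * (z$1*z$1 + z$2*z$2)"
    unfolding rot_def inner2 pt_nth power2_eq_square by algebra
  also have "\<dots> = z \<bullet> z" by (simp add: inner2)
  finally show ?thesis by (simp add: norm_eq_sqrt_inner)
qed

lemma rot_dist: "dist (rot \<psi> x) (rot \<psi> y) = dist x y"
proof -
  have "rot \<psi> x - rot \<psi> y = rot \<psi> (x - y)" using linear_diff[OF rot_linear] by simp
  thus ?thesis by (simp add: dist_norm rot_norm)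
qed

lemma norm_uu: "norm (uu \<theta>) = 1"
  by (simp add: norm_eq_sqrt_inner uu_inner)

theorem mainTheorem6:
  fixes m :: nat and a t0 :: real
  assumes "m \<ge> 2" and "a > 0"
    and "sin ((pi - 2 * pi / real (2 * m)) / 2) = 1 / a\<^sup>2"
  shows "dual_wulff (regular_polygon (2 * m) a t0) \<noteq> regular_polygon (2 * m) a t0
       \<and> congruent (dual_wulff (regular_polygon (2 * m) a t0)) (regular_polygon (2 * m) a t0)"
proof -
  define n where "n = 2*m"
  have n0: "n > 0" "real n > 0" using assms(1) by (auto simp: n_def)
  define c where "c = cos (pi/real n)"
  have "c = sin (pi/2 - pi/real n)" unfolding c_def by (rule cos_sin_eq[of "pi/real n", simplified])
  also have "pi/2 - pi/real n = (pi - 2 * pi / real (2 * m)) / 2" using n0 by (simp add: n_def field_simps)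
  finally have cA: "c = 1/a^2" using assms(3) by simp
  have ac: "a * (a * c) = 1" using cA assms(2) by (simp add: power2_eq_square)
  have ac0: "a * c > 0" using cA assms(2) by simp
  let ?V = "V n a t0"
  define P where "P = regular_polygon n a t0"
  define Q where "Q = regular_polygon n a (t0 + pi/real n)"
  have Phull: "P = convex hull (range ?V)" using poly_eq[OF n0(1)] by (simp add: P_def)
  have PH: "P = {x. \<forall>k::int. x \<bullet> uu (t0 + pi/real n + 2*pi * of_int k / real n) \<le> a * c}"
    unfolding Phull n_def c_def using halfplane[OF assms(1,2)] by simp
  have QH: "Q = {x. \<forall>k::int. x \<bullet> uu (t0 + pi/real n + pi/real n + 2*pi * of_int k / real n) \<le> a * c}"
    unfolding Q_def poly_eq[OF n0(1)] unfolding n_def c_def using halfplane[OF assms(1,2), of "t0 + pi/real (2*m)"] by simp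
  have cpt: "compact P" unfolding Phull
    by (intro compact_convex_hull finite_imp_compact range_V_finite n0)
  have cvx: "convex P" unfolding Phull by simp
  have int0: "0 \<in> interior P"
    unfolding mem_interior
  proof (intro exI[of _ "a*c"] conjI ac0 subsetI)
    fix x assume "x \<in> ball (0::real^2) (a*c)"
    hence nx: "norm x < a*c" by simp
    show "x \<in> P" unfolding PH
    proof (clarsimp)
      fix k :: int
      have "x \<bullet> uu (t0 + pi/real n + 2*pi * of_int k / real n) \<le> norm x * norm (uu (t0 + pi/real n + 2*pi * of_int k / real n))"
        by (rule norm_cauchy_schwarz)
      thus "x \<bullet> uu (t0 + pi/real n + 2*pi * of_int k / real n) \<le> a * c" using nx norm_uu by simp
    qed
  qed
  define R where "R = {x. \<forall>k::int. x \<bullet> ?V k \<le> 1}"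
  have Vh: "?V (k + int m) = - ?V k" for k using V_half[of m a t0 k] assms(1) by (simp add: n_def)
  have dualR: "dual_wulff P = R"
  proof -
    have "dual_wulff P = {x. \<forall>p\<in>P. - (x \<bullet> p) \<le> 1}" by (rule dual_polar[OF cpt cvx int0])
    also have "\<dots> = R"
    proof (intro set_eqI iffI)
      fix x assume x: "x \<in> {x. \<forall>p\<in>P. - (x \<bullet> p) \<le> 1}"
      show "x \<in> R" unfolding R_def
      proof clarsimp
        fix k :: int
        have "?V (k + int m) \<in> P" unfolding Phull by (rule hull_inc) simp
        hence "- (x \<bullet> ?V (k + int m)) \<le> 1" using x by blast
        thus "x \<bullet> ?V k \<le> 1" using Vh by simp
      qed
    next
      fix x assume x: "x \<in> R"
      have "P \<subseteq> {p. (-x) \<bullet> p \<le> 1}" unfolding Phull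
      proof (rule hull_minimal)
        show "range ?V \<subseteq> {p. (-x) \<bullet> p \<le> 1}"
        proof
          fix p assume "p \<in> range ?V"
          then obtain k where pk: "p = ?V k" by auto
          have "x \<bullet> ?V (k + int m) \<le> 1" using x by (simp add: R_def)
          hence "(-x) \<bullet> ?V k \<le> 1" using Vh by simp
          thus "p \<in> {p. (-x) \<bullet> p \<le> 1}" using pk by simp
        qed
        show "convex {p. (-x) \<bullet> p \<le> 1}" by (rule convex_halfspace_le)
      qed
      thus "x \<in> {x. \<forall>p\<in>P. - (x \<bullet> p) \<le> 1}" by auto
    qed
    finally show ?thesis .
  qed
  have QR: "Q = R"
  proof -
    have e: "x \<bullet> ?V k \<le> 1 \<longleftrightarrow> x \<bullet> uu (t0 + 2*pi * of_int k / real n) \<le> a * c" for x k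
    proof -
      have "x \<bullet> ?V k = a * (x \<bullet> uu (t0 + 2*pi * of_int k / real n))" by (simp add: V_uu)
      moreover have "a * y \<le> 1 \<longleftrightarrow> y \<le> a * c" for y
      proof -
        have "a * y \<le> a * (a * c) \<longleftrightarrow> y \<le> a * c" using assms(2) by simp
        thus ?thesis using ac by simp
      qed
      ultimately show ?thesis by simp
    qed
    have sh: "t0 + pi/real n + pi/real n + 2*pi * of_int k / real n = t0 + 2*pi * of_int (k+1) / real n" for k
      using n0 by (simp add: field_simps)
    have sh2: "t0 + 2*pi * of_int k / real n = t0 + pi/real n + pi/real n + 2*pi * of_int (k-1) / real n" for k
      using n0 by (simp add: field_simps)
    show ?thesis unfolding QH R_def e
    proof (intro set_eqI iffI)
      fix x assume h0: "x \<in> {x. \<forall>k::int. x \<bullet> uu (t0 + pi/real n + pi/real n + 2*pi * of_int k / real n) \<le> a * c}"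
      hence h: "\<forall>k::int. x \<bullet> uu (t0 + pi/real n + pi/real n + 2*pi * of_int k / real n) \<le> a * c" by simp
      show "x \<in> {x. \<forall>k::int. x \<bullet> uu (t0 + 2*pi * of_int k / real n) \<le> a * c}"
      proof (intro CollectI allI)
        fix k :: int
        show "x \<bullet> uu (t0 + 2*pi * of_int k / real n) \<le> a * c" using h[rule_format, of "k-1"] by (simp only: sh2)
      qed
    next
      fix x assume h0: "x \<in> {x. \<forall>k::int. x \<bullet> uu (t0 + 2*pi * of_int k / real n) \<le> a * c}"
      hence h: "\<forall>k::int. x \<bullet> uu (t0 + 2*pi * of_int k / real n) \<le> a * c" by simp
      show "x \<in> {x. \<forall>k::int. x \<bullet> uu (t0 + pi/real n + pi/real n + 2*pi * of_int k / real n) \<le> a * c}"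
      proof (intro CollectI allI)
        fix k :: int
        show "x \<bullet> uu (t0 + pi/real n + pi/real n + 2*pi * of_int k / real n) \<le> a * c"
          using h[rule_format, of "k+1"] by (simp only: sh)
      qed
    qed
  qed
  have neq: "dual_wulff P \<noteq> P"
  proof
    assume "dual_wulff P = P"
    moreover have "?V 0 \<in> P" unfolding Phull by (rule hull_inc) simp
    ultimately have "?V 0 \<in> R" using dualR by simp
    hence le: "?V 0 \<bullet> ?V 0 \<le> 1" by (simp add: R_def)
    have "?V 0 \<bullet> ?V 0 = a^2" by (simp add: V_uu uu_inner power2_eq_square)
    moreover have "c < 1"
    proof -
      have "pi/real n > 0" "pi/real n \<le> pi" using n0 by (simp_all add: field_simps)
      thus ?thesis using cos_monotone_0_pi[of 0 "pi/real n"] by (simp add: c_def)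
    qed
    moreover have "a^2 * c = 1" using ac by (simp add: power2_eq_square)
    ultimately show False using le assms(2)
      by (smt (verit, best) mult_le_cancel_left1 zero_less_power)
  qed
  have cong: "congruent (dual_wulff P) P"
    unfolding congruent_def dualR QR[symmetric]
  proof (intro exI[of _ "rot (- (pi/real n))"] conjI allI)
    show "\<And>x y. dist (rot (- (pi / real n)) x) (rot (- (pi / real n)) y) = dist x y" by (rule rot_dist)
    have "rot (- (pi/real n)) ` Q = convex hull (rot (- (pi/real n)) ` range (V n a (t0 + pi/real n)))"
      unfolding Q_def poly_eq[OF n0(1)] by (rule convex_hull_linear_image[OF rot_linear])
    also have "rot (- (pi/real n)) ` range (V n a (t0 + pi/real n)) = range ?V"
      by (auto simp: image_image rot_V)
    finally show "rot (- (pi/real n)) ` Q = P" using Phull by simp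
  qed
  show ?thesis using neq cong by (simp add: P_def n_def)
qed

end
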